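(* If $X$ is an infinite Tychonoff space, then $\mathcal{F}(X)$ is not pseudocompact.
   Context: $\mathcal{F}(X)$ is the set of nonempty finite subsets of $X$ with the Vietoris topology (generated by $U^+=\{A: A\subset U\}$ and $U^-=\{A: A\cap U\neq\emptyset\}$ for $U$ open in $X$). A Tychonoff space is pseudocompact if every locally finite collection of nonempty open sets is finite. *)

theory Defs
  imports "HOL-Analysis.Analysis"
begin

text \<open>Tychonoff space: completely regular and Hausdorff (T1 + completely regular is equivalent).\<close>
definition tychonoff_space :: "'a topology \<Rightarrow> bool" where
  "tychonoff_space X \<longleftrightarrow> completely_regular_space X \<and> Hausdorff_space X"

text \<open>The hyperspace F(X) of nonempty finite subsets with the Vietoris topology,
  generated (as a subbasis) by U^+ and U^- for U open in X.\<close>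
definition fin_hyperspace :: "'a topology \<Rightarrow> 'a set topology" where
  "fin_hyperspace X = topology_generated_by
     ({{A. finite A \<and> A \<noteq> {} \<and> A \<subseteq> topspace X \<and> A \<subseteq> U} | U. openin X U} \<union>
      {{A. finite A \<and> A \<noteq> {} \<and> A \<subseteq> topspace X \<and> A \<inter> U \<noteq> {}} | U. openin X U})"

definition pseudocompact_space :: "'a topology \<Rightarrow> bool" where
  "pseudocompact_space X \<longleftrightarrow>
     (\<forall>\<U>. (\<forall>U\<in>\<U>. openin X U \<and> U \<noteq> {}) \<and> locally_finite_in X \<U> \<longrightarrow> finite \<U>)"

end

theory Submission
  imports Defs
begin

lemma shrink_nbhd:
  assumes "regular_space X" "openin X P" "p \<in> P"
  shows "\<exists>Q. openin X Q \<and> p \<in> Q \<and> X closure_of Q \<subseteq> P"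
proof -
  have "closedin X (topspace X - P)" using assms(2) by blast
  moreover have "p \<in> topspace X - (topspace X - P)" using assms openin_subset by fastforce
  ultimately obtain Q where "openin X Q" "p \<in> Q" "disjnt (topspace X - P) (X closure_of Q)"
    using assms(1) unfolding regular_space by blast
  moreover have "X closure_of Q \<subseteq> topspace X" by (rule closure_of_subset_topspace)
  ultimately show ?thesis by (auto simp: disjnt_iff)
qed

lemma step_lemma:
  assumes reg: "regular_space X" and H: "Hausdorff_space X"
    and R: "openin X R" "infinite R"
  shows "\<exists>U R'. openin X U \<and> U \<noteq> {} \<and> U \<subseteq> R \<and> openin X R' \<and> infinite R' \<and> R' \<subseteq> R
           \<and> X closure_of U \<inter> X closure_of R' = {}"
proof -
  have half: "\<exists>U R'. openin X U \<and> U \<noteq> {} \<and> U \<subseteq> R \<and> openin X R' \<and> R' = R - X closure_of H2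
           \<and> X closure_of U \<inter> X closure_of R' = {}"
    if hh: "openin X H2" "y \<in> H2" "H2 \<subseteq> R" for H2 y
  proof -
    obtain H1 where H1: "openin X H1" "y \<in> H1" "X closure_of H1 \<subseteq> H2"
      using shrink_nbhd[OF reg hh(1,2)] by blast
    have o: "openin X (R - X closure_of H2)"
      using R(1) by (simp add: openin_diff)
    have "X closure_of (R - X closure_of H2) \<subseteq> topspace X - H2"
      by (rule closure_of_minimal) (use hh(1) closure_of_subset[of H2 X] openin_subset[OF that(1)] openin_subset[OF R(1)] in auto)
    then have "X closure_of H1 \<inter> X closure_of (R - X closure_of H2) = {}" using H1 by blast
    moreover have "H1 \<subseteq> R" using H1 hh closure_of_subset[of H1 X] openin_subset[OF H1(1)] by blast
    ultimately show ?thesis using H1 o by blast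
  qed
  obtain x y where xy: "x \<in> R" "y \<in> R" "x \<noteq> y"
    using R(2) by (metis finite.emptyI finite_insert insert_iff subsetI infinite_imp_nonempty finite_subset)
  have "x \<in> topspace X" "y \<in> topspace X" using xy openin_subset[OF R(1)] by auto
  then obtain G H where GH: "openin X G" "openin X H" "x \<in> G" "y \<in> H" "disjnt G H"
    using H xy unfolding Hausdorff_space_def by blast
  obtain G2 where G2: "openin X G2" "x \<in> G2" "X closure_of G2 \<subseteq> G \<inter> R"
    using shrink_nbhd[OF reg _ , of "G \<inter> R" x] GH R xy by blast
  obtain H2 where H2: "openin X H2" "y \<in> H2" "X closure_of H2 \<subseteq> H \<inter> R"
    using shrink_nbhd[OF reg _ , of "H \<inter> R" y] GH R xy by blast
  have sub: "G2 \<subseteq> R" "H2 \<subseteq> R"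
    using G2 H2 closure_of_subset[of G2 X] closure_of_subset[of H2 X] openin_subset[OF G2(1)]
      openin_subset[OF H2(1)] by auto
  have "R = (R - X closure_of G2) \<union> (R - X closure_of H2)"
    using G2 H2 GH(5) by (auto simp: disjnt_iff)
  then have "infinite (R - X closure_of G2) \<or> infinite (R - X closure_of H2)"
    using R(2) by (metis finite_Un)
  then show ?thesis
  proof
    assume inf: "infinite (R - X closure_of G2)"
    show ?thesis using half[OF G2(1,2) sub(1)] inf by blast
  next
    assume inf: "infinite (R - X closure_of H2)"
    show ?thesis using half[OF H2(1,2) sub(2)] inf by blast
  qed
qed

lemma disjoint_seq:
  assumes reg: "regular_space X" and H: "Hausdorff_space X" and inf: "infinite (topspace X)"
  shows "\<exists>U::nat \<Rightarrow> 'a set. (\<forall>n. openin X (U n) \<and> U n \<noteq> {}) \<and>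
           (\<forall>m n. m \<noteq> n \<longrightarrow> X closure_of U m \<inter> X closure_of U n = {})"
proof -
  define P where "P R p \<longleftrightarrow> openin X (fst p) \<and> fst p \<noteq> {} \<and> fst p \<subseteq> R \<and> openin X (snd p)
      \<and> infinite (snd p) \<and> snd p \<subseteq> R \<and> X closure_of (fst p) \<inter> X closure_of (snd p) = {}" for R p
  define F where "F R = (SOME p. P R p)" for R
  have FP: "P R (F R)" if hR: "openin X R" "infinite R" for R
  proof -
    obtain U R' where "openin X U \<and> U \<noteq> {} \<and> U \<subseteq> R \<and> openin X R' \<and> infinite R' \<and> R' \<subseteq> R
           \<and> X closure_of U \<inter> X closure_of R' = {}" using step_lemma[OF reg H hR] by blast
    then have "P R (U, R')" unfolding P_def by simp
    then show ?thesis unfolding F_def by (rule someI)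
  qed
  define S where "S n = rec_nat (topspace X) (\<lambda>_ R. snd (F R)) n" for n
  have S0: "S 0 = topspace X" and SS: "S (Suc n) = snd (F (S n))" for n by (simp_all add: S_def)
  have inv: "openin X (S n) \<and> infinite (S n)" for n
  proof (induction n)
    case 0 then show ?case using inf S0 by simp
  next
    case (Suc n) then show ?case using FP[of "S n"] SS[of n] unfolding P_def by simp
  qed
  have PS: "P (S n) (F (S n))" for n using FP inv by blast
  define U where "U n = fst (F (S n))" for n
  have dec: "S n \<subseteq> S m" if "m \<le> n" for m n
    using that
  proof (induction n)
    case 0 then show ?case by simp
  next
    case (Suc n)
    have "S (Suc n) \<subseteq> S n" using PS[of n] SS[of n] unfolding P_def by simp
    with Suc show ?case by (metis le_Suc_eq order_refl order_trans)
  qed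
  have lt: "X closure_of U m \<inter> X closure_of U n = {}" if "m < n" for m n
  proof -
    have "U n \<subseteq> S (Suc m)" using PS[of n] dec[of "Suc m" n] that unfolding U_def P_def by auto
    then have "X closure_of U n \<subseteq> X closure_of S (Suc m)" by (rule closure_of_mono)
    moreover have "X closure_of U m \<inter> X closure_of S (Suc m) = {}"
      using PS[of m] SS[of m] unfolding U_def P_def by simp
    ultimately show ?thesis by blast
  qed
  show ?thesis
  proof (intro exI conjI allI impI)
    fix n show "openin X (U n)" "U n \<noteq> {}" using PS[of n] unfolding U_def P_def by auto
  next
    fix m n :: nat assume "m \<noteq> n"
    then show "X closure_of U m \<inter> X closure_of U n = {}"
      using lt[of m n] lt[of n m] by (metis inf_commute linorder_neq_iff)
  qed
qed

theorem lemma4p6: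
  fixes X :: "'a topology"
  assumes "tychonoff_space X" and "infinite (topspace X)"
  shows "\<not> pseudocompact_space (fin_hyperspace X)"
proof -
  have reg: "regular_space X" and H: "Hausdorff_space X"
    using assms(1) completely_regular_imp_regular_space unfolding tychonoff_space_def by auto
  obtain U :: "nat \<Rightarrow> 'a set" where U: "\<And>n. openin X (U n)" "\<And>n. U n \<noteq> {}"
    and disj: "\<And>m n. m \<noteq> n \<Longrightarrow> X closure_of U m \<inter> X closure_of U n = {}"
    using disjoint_seq[OF reg H assms(2)] by blast
  have Usub: "U n \<subseteq> topspace X" for n using U(1) openin_subset by blast
  have Udisj: "U m \<inter> U n = {}" if "m \<noteq> n" for m n
    using disj[OF that] closure_of_subset[OF Usub[of m]] closure_of_subset[OF Usub[of n]] by blast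
  define T where "T = fin_hyperspace X"
  define plus where "plus V = {A. finite A \<and> A \<noteq> {} \<and> A \<subseteq> topspace X \<and> A \<subseteq> V}" for V
  define minus where "minus V = {A. finite A \<and> A \<noteq> {} \<and> A \<subseteq> topspace X \<and> A \<inter> V \<noteq> {}}" for V
  have plus_open: "openin T (plus V)" if "openin X V" for V
    unfolding T_def fin_hyperspace_def plus_def
    by (rule topology_generated_by_Basis) (use that in blast)
  have minus_open: "openin T (minus V)" if "openin X V" for V
    unfolding T_def fin_hyperspace_def minus_def
    by (rule topology_generated_by_Basis) (use that in blast)
  have topT: "topspace T = {A. finite A \<and> A \<noteq> {} \<and> A \<subseteq> topspace X}"
  proof
    show "topspace T \<subseteq> {A. finite A \<and> A \<noteq> {} \<and> A \<subseteq> topspace X}"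
      unfolding T_def fin_hyperspace_def topology_generated_by_topspace by blast
    show "{A. finite A \<and> A \<noteq> {} \<and> A \<subseteq> topspace X} \<subseteq> topspace T"
      using openin_subset[OF plus_open[OF openin_topspace[of X]]] unfolding plus_def by blast
  qed
  define W where "W n = {A. finite A \<and> A \<noteq> {} \<and> A \<subseteq> topspace X \<and> (\<forall>i\<le>n. A \<inter> U i \<noteq> {})}" for n
  have Wopen: "openin T (W n)" for n
  proof (induction n)
    case 0
    have "W 0 = minus (U 0)" unfolding W_def minus_def by auto
    then show ?case using minus_open[OF U(1)] by simp
  next
    case (Suc n)
    have "W (Suc n) = W n \<inter> minus (U (Suc n))" unfolding W_def minus_def
      by (auto simp: le_Suc_eq)
    then show ?case using Suc minus_open[OF U(1)] by (simp add: openin_Int)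
  qed
  define x where "x i = (SOME y. y \<in> U i)" for i
  have xU: "x i \<in> U i" for i unfolding x_def using U(2) by (simp add: some_in_eq)
  have xX: "x i \<in> topspace X" for i using xU Usub by blast
  have BW: "x ` {..m} \<in> W m" for m
  proof -
    have "\<forall>i\<le>m. x ` {..m} \<inter> U i \<noteq> {}" using xU by blast
    moreover have "x ` {..m} \<subseteq> topspace X" using xX by blast
    ultimately show ?thesis unfolding W_def by simp
  qed
  have BnW: "x ` {..m} \<notin> W n" if "m < n" for m n
  proof -
    have "x ` {..m} \<inter> U n = {}" using xU Udisj that by (auto simp: disjoint_iff) (metis less_le_not_le order.trans)
    then show ?thesis unfolding W_def by auto
  qed
  have "inj W"
  proof (rule injI)
    fix m n assume "W m = W n"
    then show "m = n" using BW BnW by (metis linorder_neq_iff)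
  qed
  then have infW: "infinite (range W)" by (rule range_inj_infinite)
  have Wne: "W n \<noteq> {}" for n using BW by blast
  have lf: "locally_finite_in T (range W)"
    unfolding locally_finite_in_def
  proof (intro conjI ballI)
    show "\<Union> (range W) \<subseteq> topspace T" using Wopen openin_subset by blast
  next
    fix A assume A: "A \<in> topspace T"
    then have Afin: "finite A" and AX: "A \<subseteq> topspace X" using topT by auto
    have fa: "finite {i. a \<in> X closure_of U i}" for a
    proof (cases "\<exists>j. a \<in> X closure_of U j")
      case True
      then obtain j where "a \<in> X closure_of U j" by blast
      then have "{i. a \<in> X closure_of U i} \<subseteq> {j}" using disj by blast
      then show ?thesis using finite_subset by blast
    next
      case False then show ?thesis by simp
    qed
    have "{i. A \<inter> X closure_of U i \<noteq> {}} = (\<Union>a\<in>A. {i. a \<in> X closure_of U i})" by blast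
    then have "finite {i. A \<inter> X closure_of U i \<noteq> {}}" using Afin fa by simp
    then obtain i where i: "i \<notin> {i. A \<inter> X closure_of U i \<noteq> {}}"
      using ex_new_if_finite[OF infinite_UNIV_nat] by blast
    define V where "V = plus (topspace X - X closure_of U i)"
    have Vo: "openin T V" unfolding V_def
      by (rule plus_open) (simp add: openin_diff)
    have AV: "A \<in> V" using A topT i AX unfolding V_def plus_def by auto
    have "{S \<in> range W. S \<inter> V \<noteq> {}} \<subseteq> W ` {..<i}"
    proof
      fix S assume "S \<in> {S \<in> range W. S \<inter> V \<noteq> {}}"
      then obtain n B where S: "S = W n" "B \<in> W n" "B \<in> V" by blast
      have "n < i"
      proof (rule ccontr)
        assume "\<not> n < i"
        then have "B \<inter> U i \<noteq> {}" using S(2) unfolding W_def by auto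
        moreover have "B \<inter> X closure_of U i = {}" using S(3) unfolding V_def plus_def by auto
        ultimately show False using closure_of_subset[OF Usub[of i]] by blast
      qed
      then show "S \<in> W ` {..<i}" using S by blast
    qed
    then have "finite {S \<in> range W. S \<inter> V \<noteq> {}}" by (rule finite_subset) simp
    then show "\<exists>V. openin T V \<and> A \<in> V \<and> finite {S \<in> range W. S \<inter> V \<noteq> {}}"
      using Vo AV by blast
  qed
  have "(\<forall>S\<in>range W. openin T S \<and> S \<noteq> {}) \<and> locally_finite_in T (range W)"
    using Wopen Wne lf by auto
  then have "\<not> (\<forall>\<U>. (\<forall>S\<in>\<U>. openin T S \<and> S \<noteq> {}) \<and> locally_finite_in T \<U> \<longrightarrow> finite \<U>)"
    using infW by blast
  then show ?thesis
    unfolding pseudocompact_space_def T_def by simp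
qed

end
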